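(* Consider the optimization problem over user association $\mathbf{x}=(x_{ij})$, resource allocation $\mathbf{y}=(y_{ij})$ and power $\mathbf{p}=(p_i)$, $i\in\mathcal I=\{1,\dots,I\}$, $j\in\mathcal J=\{1,\dots,J\}$: \[ \max_{\mathbf x,\mathbf y,\mathbf p}\ \sum_{j\in\mathcal J}\omega_j\log_2\Big(KB\sum_{i\in\mathcal I}y_{ij}\log_2(1+\eta_{ij})\Big) \] subject to $\eta_{ij}=\dfrac{p_i g_{ij}}{\sum_{k\in\mathcal I\setminus\{i\}}d_k p_k g_{kj}+\sigma^2}$ for all $i,j$; $\sum_{i\in\mathcal I}x_{ij}=1$ for all $j$; $d_i=\sum_{j\in\mathcal J}y_{ij}$ for all $i$; $0\le p_i\le P_i$ for all $i$; $0\le d_i\le 1$ for all $i$; $0\le y_{ij}\le x_{ij}$ and $x_{ij}\in\{0,1\}$ for all $i,j$. Then at an optimal solution $(\mathbf x^*,\mathbf y^*,\mathbf p^* )$ the load of every BS is binary: $d_i^*=\sum_{j\in\mathcal J}y^*_{ij}\in\{0,1\}$ for all $i\in\mathcal I$; i.e., each BS operates either at full load ($d_i^*=1$) or at zero load ($d_i^*=0$).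
   Context: Downlink heterogeneous network with $I$ base stations (BSs) and $J$ users. $x_{ij}\in\{0,1\}$ indicates that user $j$ is associated with BS $i$; $y_{ij}$ is the fraction of time-frequency resource blocks BS $i$ allocates to user $j$; $d_i$ is the load of BS $i$; $p_i$ is the per-resource-block transmit power of BS $i$ with maximum $P_i>0$. The constants $K>0$, $B>0$, channel gains $g_{ij}>0$, noise power $\sigma^2>0$ and user priorities $\omega_j>0$ are given. $\eta_{ij}$ is the (load-coupled) average SINR of user $j$ served by BS $i$. *)

theory Defs
  imports Complex_Main "HOL-Library.Extended_Real"
begin

definition bs_load :: "nat \<Rightarrow> (nat \<Rightarrow> nat \<Rightarrow> real) \<Rightarrow> nat \<Rightarrow> real" where
  "bs_load J y i = (\<Sum>j\<in>{1..J}. y i j)"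

definition sinr :: "nat \<Rightarrow> nat \<Rightarrow> (nat \<Rightarrow> nat \<Rightarrow> real) \<Rightarrow> real \<Rightarrow>
    (nat \<Rightarrow> nat \<Rightarrow> real) \<Rightarrow> (nat \<Rightarrow> real) \<Rightarrow> nat \<Rightarrow> nat \<Rightarrow> real" where
  "sinr I J g \<sigma>2 y p i j =
     p i * g i j / ((\<Sum>k\<in>{1..I} - {i}. bs_load J y k * p k * g k j) + \<sigma>2)"

definition user_rate :: "nat \<Rightarrow> nat \<Rightarrow> real \<Rightarrow> real \<Rightarrow> (nat \<Rightarrow> nat \<Rightarrow> real) \<Rightarrow> real \<Rightarrow>
    (nat \<Rightarrow> nat \<Rightarrow> real) \<Rightarrow> (nat \<Rightarrow> real) \<Rightarrow> nat \<Rightarrow> real" where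
  "user_rate I J K B g \<sigma>2 y p j =
     K * B * (\<Sum>i\<in>{1..I}. y i j * log 2 (1 + sinr I J g \<sigma>2 y p i j))"

text \<open>Objective with the standard convention log2 0 = -infinity (rates are always \<ge> 0).\<close>
definition utility :: "nat \<Rightarrow> nat \<Rightarrow> real \<Rightarrow> real \<Rightarrow> (nat \<Rightarrow> nat \<Rightarrow> real) \<Rightarrow> real \<Rightarrow>
    (nat \<Rightarrow> real) \<Rightarrow> (nat \<Rightarrow> nat \<Rightarrow> real) \<Rightarrow> (nat \<Rightarrow> real) \<Rightarrow> ereal" where
  "utility I J K B g \<sigma>2 \<omega> y p =
     (if \<forall>j\<in>{1..J}. user_rate I J K B g \<sigma>2 y p j > 0
      then ereal (\<Sum>j\<in>{1..J}. \<omega> j * log 2 (user_rate I J K B g \<sigma>2 y p j))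
      else -\<infinity>)"

definition feasible :: "nat \<Rightarrow> nat \<Rightarrow> (nat \<Rightarrow> real) \<Rightarrow>
    (nat \<Rightarrow> nat \<Rightarrow> real) \<Rightarrow> (nat \<Rightarrow> nat \<Rightarrow> real) \<Rightarrow> (nat \<Rightarrow> real) \<Rightarrow> bool" where
  "feasible I J P x y p \<longleftrightarrow>
     (\<forall>j\<in>{1..J}. (\<Sum>i\<in>{1..I}. x i j) = 1) \<and>
     (\<forall>i\<in>{1..I}. 0 \<le> p i \<and> p i \<le> P i) \<and>
     (\<forall>i\<in>{1..I}. 0 \<le> bs_load J y i \<and> bs_load J y i \<le> 1) \<and>
     (\<forall>i\<in>{1..I}. \<forall>j\<in>{1..J}. 0 \<le> y i j \<and> y i j \<le> x i j \<and> x i j \<in> {0, 1})"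

definition optimal :: "nat \<Rightarrow> nat \<Rightarrow> real \<Rightarrow> real \<Rightarrow> (nat \<Rightarrow> nat \<Rightarrow> real) \<Rightarrow> real \<Rightarrow>
    (nat \<Rightarrow> real) \<Rightarrow> (nat \<Rightarrow> real) \<Rightarrow>
    (nat \<Rightarrow> nat \<Rightarrow> real) \<Rightarrow> (nat \<Rightarrow> nat \<Rightarrow> real) \<Rightarrow> (nat \<Rightarrow> real) \<Rightarrow> bool" where
  "optimal I J K B g \<sigma>2 \<omega> P x y p \<longleftrightarrow>
     feasible I J P x y p \<and>
     (\<forall>x' y' p'. feasible I J P x' y' p' \<longrightarrow>
        utility I J K B g \<sigma>2 \<omega> y' p' \<le> utility I J K B g \<sigma>2 \<omega> y p)"

end

theory Submission
  imports Defs
begin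

lemma key_ln:
  fixes d s :: real
  assumes "0 < d" "d < 1" "0 < s"
  shows "d * ln (1 + s) < ln (1 + d * s)"
proof -
  define u where "u = 1 + d * s"
  have u0: "u > 0" using assms by (simp add: u_def add_pos_pos)
  have ne1: "1 + s \<noteq> u" using assms by (simp add: u_def)
  have ne2: "(1::real) \<noteq> u" using assms by (simp add: u_def)
  have A: "ln (1 + s) - ln u < (1 + s - u) / u"
    using ln_diff_less[of "1+s" u] u0 ne1 assms by simp
  have B: "ln 1 - ln u < (1 - u) / u"
    using ln_diff_less[of 1 u] u0 ne2 by simp
  have A': "d * (ln (1 + s) - ln u) < d * ((1 + s - u) / u)"
    using A assms by (intro mult_strict_left_mono) auto
  have B': "(1 - d) * (ln 1 - ln u) < (1 - d) * ((1 - u) / u)"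
    using B assms by (intro mult_strict_left_mono) auto
  have eq: "d * ((1 + s - u) / u) + (1 - d) * ((1 - u) / u) = 0"
    using u0 by (simp add: field_simps u_def)
  have "d * (ln (1 + s) - ln u) + (1 - d) * (ln 1 - ln u) < 0"
    using A' B' eq by linarith
  then have "d * ln (1 + s) < ln u" by (simp add: algebra_simps)
  then show ?thesis by (simp add: u_def)
qed

lemma key_term:
  fixes d s t :: real
  assumes "0 < d" "d < 1" "0 \<le> s" "0 \<le> t"
  shows "t * log 2 (1 + s) \<le> (t / d) * log 2 (1 + d * s)"
    and "0 < s \<Longrightarrow> 0 < t \<Longrightarrow> t * log 2 (1 + s) < (t / d) * log 2 (1 + d * s)"
proof -
  have gen: "d * ln (1 + s) \<le> ln (1 + d * s)"
  proof (cases "s = 0")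
    case True then show ?thesis by simp
  next
    case False then show ?thesis using key_ln[of d s] assms by simp
  qed
  have l2: "ln (2::real) > 0" by simp
  have "t * log 2 (1 + s) = (t / d) * (d * ln (1 + s)) / ln 2"
    using assms by (simp add: log_def field_simps)
  also have "\<dots> \<le> (t / d) * ln (1 + d * s) / ln 2"
    using gen assms l2 by (intro divide_right_mono mult_left_mono) auto
  also have "\<dots> = (t / d) * log 2 (1 + d * s)" by (simp add: log_def)
  finally show "t * log 2 (1 + s) \<le> (t / d) * log 2 (1 + d * s)" .
  assume s: "0 < s" and t: "0 < t"
  have "t * log 2 (1 + s) = (t / d) * (d * ln (1 + s)) / ln 2"
    using assms by (simp add: log_def field_simps)
  also have "\<dots> < (t / d) * ln (1 + d * s) / ln 2"
    using key_ln[of d s] assms s t l2 by (intro divide_strict_right_mono mult_strict_left_mono) auto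
  also have "\<dots> = (t / d) * log 2 (1 + d * s)" by (simp add: log_def)
  finally show "t * log 2 (1 + s) < (t / d) * log 2 (1 + d * s)" .
qed

lemma sinr_nonneg:
  assumes "\<forall>k\<in>{1..I}. 0 \<le> bs_load J y k" "\<forall>k\<in>{1..I}. 0 \<le> p k"
    "\<forall>i\<in>{1..I}. \<forall>j\<in>{1..J}. g i j > 0" "\<sigma>2 > 0" "i \<in> {1..I}" "j \<in> {1..J}"
  shows "0 \<le> sinr I J g \<sigma>2 y p i j" and "p i > 0 \<Longrightarrow> 0 < sinr I J g \<sigma>2 y p i j"
proof -
  have "(\<Sum>k\<in>{1..I} - {i}. bs_load J y k * p k * g k j) \<ge> 0"
  proof (intro sum_nonneg)
    fix k assume k: "k \<in> {1..I} - {i}"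
    then have "0 \<le> g k j" using assms by (meson DiffD1 less_imp_le)
    then show "0 \<le> bs_load J y k * p k * g k j" using assms k by auto
  qed
  then have D: "(\<Sum>k\<in>{1..I} - {i}. bs_load J y k * p k * g k j) + \<sigma>2 > 0"
    using assms by linarith
  show "0 \<le> sinr I J g \<sigma>2 y p i j"
  proof -
    have "0 < g i j" using assms by blast
    moreover have "0 \<le> p i" using assms by blast
    ultimately have "0 \<le> p i * g i j" by simp
    then show ?thesis unfolding sinr_def using D by (rule divide_nonneg_pos)
  qed
  show "0 < sinr I J g \<sigma>2 y p i j" if pi: "p i > 0"
  proof -
    have "0 < g i j" using assms by blast
    then have "0 < p i * g i j" using pi by simp
    then show ?thesis unfolding sinr_def using D by (rule divide_pos_pos)
  qed
qed

theorem theorem2: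
  fixes I J :: nat and K B \<sigma>2 :: real
    and g :: "nat \<Rightarrow> nat \<Rightarrow> real" and \<omega> P :: "nat \<Rightarrow> real"
    and x y :: "nat \<Rightarrow> nat \<Rightarrow> real" and p :: "nat \<Rightarrow> real"
  assumes "K > 0" and "B > 0" and "\<sigma>2 > 0"
    and "\<forall>i\<in>{1..I}. \<forall>j\<in>{1..J}. g i j > 0"
    and "\<forall>j\<in>{1..J}. \<omega> j > 0"
    and "\<forall>i\<in>{1..I}. P i > 0"
    and "optimal I J K B g \<sigma>2 \<omega> P x y p"
  shows "\<forall>i\<in>{1..I}. bs_load J y i \<in> {0, 1}"
proof (rule ccontr)
  assume "\<not> ?thesis"
  then obtain i0 where i0: "i0 \<in> {1..I}" "bs_load J y i0 \<notin> {0,1}" by blast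
  have feas: "feasible I J P x y p"
    and opt: "\<And>x' y' p'. feasible I J P x' y' p' \<Longrightarrow>
        utility I J K B g \<sigma>2 \<omega> y' p' \<le> utility I J K B g \<sigma>2 \<omega> y p"
    using assms(7) unfolding optimal_def by auto
  note F = feas[unfolded feasible_def]
  define d where "d = bs_load J y i0"
  have d0: "0 < d" "d < 1" using F i0 unfolding d_def by force+
  have J1: "J \<ge> 1"
  proof (rule ccontr)
    assume "\<not> J \<ge> 1" then have "J = 0" by simp
    then show False using d0 by (simp add: d_def bs_load_def)
  qed
  have I1: "I \<ge> 1" using i0 by simp
  (* witness with finite utility *)
  define x0 :: "nat \<Rightarrow> nat \<Rightarrow> real" where "x0 = (\<lambda>k j. if k = 1 then 1 else 0)"
  define y0 :: "nat \<Rightarrow> nat \<Rightarrow> real" where "y0 = (\<lambda>k j. if k = 1 then 1 / real J else 0)"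
  have bl0: "bs_load J y0 k = (if k = 1 then 1 else 0)" for k
    using J1 by (simp add: bs_load_def y0_def)
  have feas0: "feasible I J P x0 y0 P"
    unfolding feasible_def bl0 using I1 J1 assms(6) by (auto simp: x0_def y0_def bl0 less_imp_le)
  have rate0: "user_rate I J K B g \<sigma>2 y0 P j > 0" if j: "j \<in> {1..J}" for j
  proof -
    have s0: "sinr I J g \<sigma>2 y0 P 1 j > 0"
    proof (rule sinr_nonneg(2))
      show "\<forall>k\<in>{1..I}. 0 \<le> bs_load J y0 k" by (simp add: bl0)
      show "\<forall>k\<in>{1..I}. 0 \<le> P k" using assms(6) by (auto simp: less_imp_le)
    qed (use j I1 assms(3,4,6) in auto)
    have "(\<Sum>i\<in>{1..I}. y0 i j * log 2 (1 + sinr I J g \<sigma>2 y0 P i j))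
        = (1 / real J) * log 2 (1 + sinr I J g \<sigma>2 y0 P 1 j)"
      using I1 by (subst sum.remove[of _ 1]) (auto simp: y0_def)
    also have "\<dots> > 0" using s0 J1 by simp
    finally show ?thesis unfolding user_rate_def using assms(1,2) by simp
  qed
  have "utility I J K B g \<sigma>2 \<omega> y0 P \<noteq> -\<infinity>"
    unfolding utility_def using rate0 by simp
  then have "utility I J K B g \<sigma>2 \<omega> y p \<noteq> -\<infinity>"
    using opt[OF feas0] by auto
  then have rpos: "\<forall>j\<in>{1..J}. user_rate I J K B g \<sigma>2 y p j > 0"
    and U: "utility I J K B g \<sigma>2 \<omega> y p = ereal (\<Sum>j\<in>{1..J}. \<omega> j * log 2 (user_rate I J K B g \<sigma>2 y p j))"
    unfolding utility_def by (auto split: if_splits)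
  have blnn: "\<forall>k\<in>{1..I}. 0 \<le> bs_load J y k" and pnn: "\<forall>k\<in>{1..I}. 0 \<le> p k"
    using F by auto
  have ynn: "\<And>k j. k \<in> {1..I} \<Longrightarrow> j \<in> {1..J} \<Longrightarrow> 0 \<le> y k j \<and> y k j \<le> x k j \<and> x k j \<in> {0,1}"
    using F by blast
  obtain j0 where j0: "j0 \<in> {1..J}" "y i0 j0 > 0"
  proof (rule ccontr)
    assume "\<not> thesis"
    with that have "\<forall>j\<in>{1..J}. y i0 j \<le> 0" by (meson not_less)
    then have "d \<le> 0" unfolding d_def bs_load_def by (intro sum_nonpos) auto
    with d0 show False by simp
  qed
  have x0j: "x i0 j0 = 1" using ynn[OF i0(1) j0(1)] j0(2) by auto
  have yoth: "y k j0 = 0" if k: "k \<in> {1..I}" "k \<noteq> i0" for k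
  proof -
    have "(\<Sum>i\<in>{1..I}. x i j0) = 1" using F j0(1) by blast
    moreover have "(\<Sum>i\<in>{1..I}. x i j0) = x i0 j0 + (\<Sum>i\<in>{1..I}-{i0}. x i j0)"
      using i0(1) by (subst sum.remove[of _ i0]) auto
    ultimately have "(\<Sum>i\<in>{1..I}-{i0}. x i j0) = 0" using x0j by simp
    moreover have "\<forall>i\<in>{1..I}-{i0}. 0 \<le> x i j0" using ynn j0(1) by fastforce
    ultimately have "\<forall>i\<in>{1..I}-{i0}. x i j0 = 0" using sum_nonneg_eq_0_iff[of "{1..I}-{i0}" "\<lambda>i. x i j0"] by simp
    then have "x k j0 = 0" using k by blast
    then show ?thesis using ynn[OF k(1) j0(1)] by simp
  qed
  have ppos: "p i0 > 0"
  proof (rule ccontr)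
    assume "\<not> p i0 > 0"
    then have p0: "p i0 = 0" using pnn i0(1) by force
    have "sinr I J g \<sigma>2 y p i0 j0 = 0" unfolding sinr_def p0 by simp
    then have "(\<Sum>i\<in>{1..I}. y i j0 * log 2 (1 + sinr I J g \<sigma>2 y p i j0)) = 0"
    proof (intro sum.neutral ballI)
      fix i assume i: "i \<in> {1..I}"
      show "y i j0 * log 2 (1 + sinr I J g \<sigma>2 y p i j0) = 0"
        using yoth[OF i] \<open>sinr I J g \<sigma>2 y p i0 j0 = 0\<close> by (cases "i = i0") auto
    qed
    then have "user_rate I J K B g \<sigma>2 y p j0 = 0" unfolding user_rate_def by simp
    with rpos j0(1) show False by fastforce
  qed
  define y' where "y' = (\<lambda>k j. if k = i0 then y k j / d else y k j)"
  define p' where "p' = (\<lambda>k. if k = i0 then d * p k else p k)"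
  have bl': "bs_load J y' k = (if k = i0 then 1 else bs_load J y k)" for k
  proof (cases "k = i0")
    case True
    have "bs_load J y' k = (\<Sum>j\<in>{1..J}. y i0 j) / d"
      unfolding bs_load_def y'_def using True by (simp add: sum_divide_distrib)
    also have "\<dots> = 1" using d0 by (simp add: d_def bs_load_def)
    finally show ?thesis using True by simp
  next
    case False then show ?thesis by (simp add: bs_load_def y'_def)
  qed
  have prod: "bs_load J y' k * p' k = bs_load J y k * p k" for k
    using d0 by (simp add: bl' p'_def d_def)
  have sinr': "sinr I J g \<sigma>2 y' p' k j = (if k = i0 then d * sinr I J g \<sigma>2 y p k j else sinr I J g \<sigma>2 y p k j)" for k j
  proof -
    have "(\<Sum>k\<in>{1..I} - {k}. bs_load J y' k * p' k * g k j) = (\<Sum>k\<in>{1..I} - {k}. bs_load J y k * p k * g k j)"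
      by (simp only: prod)
    then show ?thesis unfolding sinr_def by (simp add: p'_def)
  qed
  have feas': "feasible I J P x y' p'"
    unfolding feasible_def
  proof (intro conjI)
    show "\<forall>j\<in>{1..J}. (\<Sum>i\<in>{1..I}. x i j) = 1" using F by blast
    show "\<forall>i\<in>{1..I}. 0 \<le> p' i \<and> p' i \<le> P i"
    proof
      fix i assume i: "i \<in> {1..I}"
      have "0 \<le> p i" "p i \<le> P i" using F i by auto
      moreover have "d * p i \<le> p i" using d0 \<open>0 \<le> p i\<close> by (simp add: mult_left_le_one_le)
      ultimately show "0 \<le> p' i \<and> p' i \<le> P i" using d0 by (auto simp: p'_def)
    qed
    show "\<forall>i\<in>{1..I}. 0 \<le> bs_load J y' i \<and> bs_load J y' i \<le> 1" using F by (auto simp: bl')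
    show "\<forall>i\<in>{1..I}. \<forall>j\<in>{1..J}. 0 \<le> y' i j \<and> y' i j \<le> x i j \<and> x i j \<in> {0, 1}"
    proof (intro ballI)
      fix i j assume i: "i \<in> {1..I}" and j: "j \<in> {1..J}"
      note yy = ynn[OF i j]
      show "0 \<le> y' i j \<and> y' i j \<le> x i j \<and> x i j \<in> {0, 1}"
      proof (cases "i = i0")
        case False then show ?thesis using yy by (simp add: y'_def)
      next
        case True
        have le: "y i0 j \<le> d" unfolding d_def bs_load_def
          using j ynn i0(1) by (intro member_le_sum) auto
        show ?thesis
        proof (cases "x i j = 0")
          case True
          then have "y i0 j = 0" using yy \<open>i = i0\<close> by simp
          then show ?thesis using True yy \<open>i = i0\<close> by (simp add: y'_def)
        next
          case False
          then have "x i j = 1" using yy by auto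
          then show ?thesis using yy \<open>i = i0\<close> le d0 by (simp add: y'_def divide_le_eq)
        qed
      qed
    qed
  qed
  have term_le: "y i j * log 2 (1 + sinr I J g \<sigma>2 y p i j) \<le> y' i j * log 2 (1 + sinr I J g \<sigma>2 y' p' i j)"
    if i: "i \<in> {1..I}" and j: "j \<in> {1..J}" for i j
  proof (cases "i = i0")
    case True
    have "0 \<le> sinr I J g \<sigma>2 y p i j" using sinr_nonneg(1)[OF blnn pnn assms(4) assms(3) i j] .
    then show ?thesis using True key_term(1)[OF d0, of "sinr I J g \<sigma>2 y p i j" "y i j"] ynn[OF i j]
      unfolding sinr' by (simp add: y'_def)
  next
    case False then show ?thesis unfolding sinr' by (simp add: y'_def)
  qed
  have term_lt: "y i0 j0 * log 2 (1 + sinr I J g \<sigma>2 y p i0 j0) < y' i0 j0 * log 2 (1 + sinr I J g \<sigma>2 y' p' i0 j0)"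
  proof -
    have s: "0 < sinr I J g \<sigma>2 y p i0 j0" using sinr_nonneg(2)[OF blnn pnn assms(4) assms(3) i0(1) j0(1) ppos] .
    then show ?thesis using key_term(2)[OF d0 _ _ s j0(2)] j0(2)
      unfolding sinr' by (simp add: y'_def)
  qed
  have rate_le: "user_rate I J K B g \<sigma>2 y p j \<le> user_rate I J K B g \<sigma>2 y' p' j" if j: "j \<in> {1..J}" for j
    unfolding user_rate_def using assms(1,2) term_le j
    by (intro mult_left_mono sum_mono) auto
  have rate_lt: "user_rate I J K B g \<sigma>2 y p j0 < user_rate I J K B g \<sigma>2 y' p' j0"
    unfolding user_rate_def using assms(1,2) term_le j0(1) term_lt i0(1)
    by (intro mult_strict_left_mono sum_strict_mono_ex1) auto
  have rpos': "\<forall>j\<in>{1..J}. user_rate I J K B g \<sigma>2 y' p' j > 0"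
    using rpos rate_le by (meson less_le_trans)
  have U': "utility I J K B g \<sigma>2 \<omega> y' p' = ereal (\<Sum>j\<in>{1..J}. \<omega> j * log 2 (user_rate I J K B g \<sigma>2 y' p' j))"
    unfolding utility_def using rpos' by simp
  have "(\<Sum>j\<in>{1..J}. \<omega> j * log 2 (user_rate I J K B g \<sigma>2 y p j))
      < (\<Sum>j\<in>{1..J}. \<omega> j * log 2 (user_rate I J K B g \<sigma>2 y' p' j))"
  proof (rule sum_strict_mono_ex1)
    show "finite {1..J}" by simp
    show "\<forall>j\<in>{1..J}. \<omega> j * log 2 (user_rate I J K B g \<sigma>2 y p j) \<le> \<omega> j * log 2 (user_rate I J K B g \<sigma>2 y' p' j)"
    proof
      fix j assume j: "j \<in> {1..J}"
      have "log 2 (user_rate I J K B g \<sigma>2 y p j) \<le> log 2 (user_rate I J K B g \<sigma>2 y' p' j)"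
        using rpos rpos' rate_le[OF j] j by simp
      then show "\<omega> j * log 2 (user_rate I J K B g \<sigma>2 y p j) \<le> \<omega> j * log 2 (user_rate I J K B g \<sigma>2 y' p' j)"
        using assms(5) j by (simp add: mult_left_mono less_imp_le)
    qed
    have "log 2 (user_rate I J K B g \<sigma>2 y p j0) < log 2 (user_rate I J K B g \<sigma>2 y' p' j0)"
      using rpos rpos' rate_lt j0(1) by simp
    then show "\<exists>j\<in>{1..J}. \<omega> j * log 2 (user_rate I J K B g \<sigma>2 y p j) < \<omega> j * log 2 (user_rate I J K B g \<sigma>2 y' p' j)"
      using assms(5) j0(1) by (intro bexI[of _ j0]) auto
  qed
  moreover have "utility I J K B g \<sigma>2 \<omega> y' p' \<le> utility I J K B g \<sigma>2 \<omega> y p" using opt[OF feas'] .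
  ultimately show False unfolding U U' by simp
qed
end
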